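(* Let $\Gamma=\mathrm{Cay}(G,S)$ be a distance-regular Cayley graph with intersection array $\{k,k-1,k-\mu;1,\mu,k\}$ (so $\Gamma$ is bipartite of diameter $3$), and let $H$ be the part of this bipartite graph containing the identity element. If $|H|\not\equiv 0\pmod 4$, or $k$ is odd, or $H$ is abelian, then $\Gamma$ is isomorphic to a Cayley graph on some semidirect product $H\rtimes\mathbb{Z}_2$.
   Context: For a finite group $G$ with identity $e$ and a subset $S\subseteq G\setminus\{e\}$ with $S=S^{-1}$, the Cayley graph $\mathrm{Cay}(G,S)$ has vertex set $G$, two vertices $a,b$ being adjacent iff $ab^{-1}\in S$. A connected graph of diameter $d$ is distance-regular with intersection array $\{b_0,\dots,b_{d-1};c_1,\dots,c_d\}$ if for all vertices $x,y$ at distance $i$, the number of neighbours of $x$ at distance $i+1$ (resp. $i-1$) from $y$ is $b_i$ (resp. $c_i$). *)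

theory Defs
  imports "HOL-Algebra.Algebra"
begin

definition cay_adj :: "('a, 'b) monoid_scheme \<Rightarrow> 'a set \<Rightarrow> 'a \<Rightarrow> 'a \<Rightarrow> bool" where
  "cay_adj G S a b \<longleftrightarrow> a \<in> carrier G \<and> b \<in> carrier G \<and> a \<otimes>\<^bsub>G\<^esub> inv\<^bsub>G\<^esub> b \<in> S"

definition gdist :: "('a \<Rightarrow> 'a \<Rightarrow> bool) \<Rightarrow> 'a \<Rightarrow> 'a \<Rightarrow> nat" where
  "gdist Adj x y = (LEAST n. (Adj ^^ n) x y)"

definition connected_graph :: "'a set \<Rightarrow> ('a \<Rightarrow> 'a \<Rightarrow> bool) \<Rightarrow> bool" where
  "connected_graph V Adj \<longleftrightarrow> (\<forall>x\<in>V. \<forall>y\<in>V. \<exists>n. (Adj ^^ n) x y)"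

definition has_diameter :: "'a set \<Rightarrow> ('a \<Rightarrow> 'a \<Rightarrow> bool) \<Rightarrow> nat \<Rightarrow> bool" where
  "has_diameter V Adj d \<longleftrightarrow>
     (\<forall>x\<in>V. \<forall>y\<in>V. gdist Adj x y \<le> d) \<and> (\<exists>x\<in>V. \<exists>y\<in>V. gdist Adj x y = d)"

text \<open>Distance-regular with intersection array {bs!0,...,bs!(d-1); cs!0,...,cs!(d-1)},
  i.e. b_i = bs!i (0 \<le> i < d) and c_i = cs!(i-1) (1 \<le> i \<le> d), where d = length bs.\<close>
definition distance_regular ::
  "'a set \<Rightarrow> ('a \<Rightarrow> 'a \<Rightarrow> bool) \<Rightarrow> nat list \<Rightarrow> nat list \<Rightarrow> bool" where
  "distance_regular V Adj bs cs \<longleftrightarrow>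
     finite V \<and> V \<noteq> {} \<and> length cs = length bs \<and>
     connected_graph V Adj \<and> has_diameter V Adj (length bs) \<and>
     (\<forall>x\<in>V. \<forall>y\<in>V. let i = gdist Adj x y in
        (i < length bs \<longrightarrow>
           card {z \<in> V. Adj x z \<and> gdist Adj z y = i + 1} = bs ! i) \<and>
        (1 \<le> i \<longrightarrow>
           card {z \<in> V. Adj x z \<and> gdist Adj z y = i - 1} = cs ! (i - 1)))"

definition graph_iso ::
  "'a set \<Rightarrow> ('a \<Rightarrow> 'a \<Rightarrow> bool) \<Rightarrow> 'c set \<Rightarrow> ('c \<Rightarrow> 'c \<Rightarrow> bool) \<Rightarrow> bool" where
  "graph_iso V1 A1 V2 A2 \<longleftrightarrow>
     (\<exists>f. bij_betw f V1 V2 \<and> (\<forall>x\<in>V1. \<forall>y\<in>V1. A1 x y \<longleftrightarrow> A2 (f x) (f y)))"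

section \<open>Semidirect product H \<rtimes>_phi Z_2 (Z_2 realised as bool with xor)\<close>

definition semidirect_Z2 :: "('a, 'b) monoid_scheme \<Rightarrow> ('a \<Rightarrow> 'a) \<Rightarrow> ('a \<times> bool) monoid" where
  "semidirect_Z2 H \<phi> =
     \<lparr> carrier = carrier H \<times> UNIV,
       monoid.mult = (\<lambda>(h1, a) (h2, b). (h1 \<otimes>\<^bsub>H\<^esub> (if a then \<phi> h2 else h2), a \<noteq> b)),
       monoid.one = (\<one>\<^bsub>H\<^esub>, False) \<rparr>"

end

theory Submission
  imports Defs "HOL-Combinatorics.Permutations"
begin

locale drc =
  fixes G :: "('a, 'b) monoid_scheme" and S :: "'a set" and k \<mu> :: nat
  assumes grp: "group G" and fin: "finite (carrier G)"
    and Ssub: "S \<subseteq> carrier G - {\<one>\<^bsub>G\<^esub>}" and Sinv: "\<forall>s\<in>S. inv\<^bsub>G\<^esub> s \<in> S"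
    and dr: "distance_regular (carrier G) (cay_adj G S) [k, k - 1, k - \<mu>] [1, \<mu>, k]"
begin

interpretation G: group G by (rule grp)

abbreviation "Adj \<equiv> cay_adj G S"
abbreviation "d \<equiv> gdist (cay_adj G S)"

lemma adjV: "Adj x y \<Longrightarrow> x \<in> carrier G \<and> y \<in> carrier G"
  by (simp add: cay_adj_def)

lemma adj_sym: "Adj x y \<Longrightarrow> Adj y x"
proof -
  assume a: "Adj x y"
  hence xy: "x \<in> carrier G" "y \<in> carrier G" "x \<otimes>\<^bsub>G\<^esub> inv\<^bsub>G\<^esub> y \<in> S" by (auto simp: cay_adj_def)
  hence "inv\<^bsub>G\<^esub> (x \<otimes>\<^bsub>G\<^esub> inv\<^bsub>G\<^esub> y) \<in> S" using Sinv by blast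
  also have "inv\<^bsub>G\<^esub> (x \<otimes>\<^bsub>G\<^esub> inv\<^bsub>G\<^esub> y) = y \<otimes>\<^bsub>G\<^esub> inv\<^bsub>G\<^esub> x"
    using xy by (simp add: G.inv_mult_group)
  finally show ?thesis using xy by (simp add: cay_adj_def)
qed

lemma adj_irrefl: "\<not> Adj x x"
  using Ssub by (auto simp: cay_adj_def)

lemma pow_sym: "(Adj ^^ n) x y \<Longrightarrow> (Adj ^^ n) y x"
proof (induction n arbitrary: x y)
  case 0 thus ?case by (auto elim: relpowp_0_E)
next
  case (Suc n)
  from Suc.prems obtain u where "(Adj ^^ n) x u" "Adj u y" by (auto elim: relpowp_Suc_E)
  thus ?case using Suc.IH adj_sym by (metis relpowp_Suc_I2)
qed

lemma conn: "x \<in> carrier G \<Longrightarrow> y \<in> carrier G \<Longrightarrow> \<exists>n. (Adj ^^ n) x y"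
  using dr by (auto simp: distance_regular_def connected_graph_def)

lemma d_le: "(Adj ^^ n) x y \<Longrightarrow> d x y \<le> n"
  unfolding gdist_def by (rule Least_le)

lemma d_walk: "x \<in> carrier G \<Longrightarrow> y \<in> carrier G \<Longrightarrow> (Adj ^^ (d x y)) x y"
  unfolding gdist_def using conn by (metis LeastI_ex)

lemma d_sym: "d x y = d y x"
  unfolding gdist_def using pow_sym by metis

lemma d_refl: "d x x = 0"
  using d_le[of 0 x x] by simp

lemma d_0: "x \<in> carrier G \<Longrightarrow> y \<in> carrier G \<Longrightarrow> d x y = 0 \<Longrightarrow> x = y"
  using d_walk[of x y] by (auto elim: relpowp_0_E)

lemma d_1: "x \<in> carrier G \<Longrightarrow> y \<in> carrier G \<Longrightarrow> d x y = 1 \<longleftrightarrow> Adj x y"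
proof
  assume "x \<in> carrier G" "y \<in> carrier G" "d x y = 1"
  hence "(Adj ^^ 1) x y" using d_walk[of x y] by simp
  thus "Adj x y" by (metis One_nat_def relpowp_Suc_0)
next
  assume "Adj x y"
  hence "d x y \<le> 1" using d_le[of 1 x y] by (metis One_nat_def relpowp_Suc_0)
  moreover have "d x y \<noteq> 0" using \<open>Adj x y\<close> adj_irrefl d_0 adjV by metis
  ultimately show "d x y = 1" by simp
qed

lemma d_step: "Adj x z \<Longrightarrow> y \<in> carrier G \<Longrightarrow> d z y \<le> d x y + 1"
proof -
  assume a: "Adj x z" "y \<in> carrier G"
  hence "(Adj ^^ d x y) x y" using d_walk adjV by blast
  hence "(Adj ^^ Suc (d x y)) z y" using adj_sym[OF a(1)] by (rule relpowp_Suc_I2[rotated])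
  thus ?thesis using d_le by fastforce
qed

lemma DR:
  assumes "x \<in> carrier G" "y \<in> carrier G"
  shows "d x y \<le> 3"
    "d x y < 3 \<Longrightarrow> card {z \<in> carrier G. Adj x z \<and> d z y = d x y + 1} = [k, k - 1, k - \<mu>] ! (d x y)"
    "1 \<le> d x y \<Longrightarrow> card {z \<in> carrier G. Adj x z \<and> d z y = d x y - 1} = [1, \<mu>, k] ! (d x y - 1)"
  using dr assms unfolding distance_regular_def has_diameter_def Let_def numeral_3_eq_3 by auto

lemma diam: "\<exists>x\<in>carrier G. \<exists>y\<in>carrier G. d x y = 3"
  using dr unfolding distance_regular_def has_diameter_def numeral_3_eq_3 by auto

lemma nbr_fin: "finite {z \<in> carrier G. P z}"
  using fin by simp

lemma degree: "x \<in> carrier G \<Longrightarrow> card {z \<in> carrier G. Adj x z} = k"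
proof -
  assume x: "x \<in> carrier G"
  have "{z \<in> carrier G. Adj x z} = {z \<in> carrier G. Adj x z \<and> d z x = d x x + 1}"
  proof -
    have "\<And>z. Adj x z \<Longrightarrow> d z x = 1" by (meson adjV adj_sym d_1)
    thus ?thesis by (auto simp: d_refl)
  qed
  thus ?thesis using DR(2)[OF x x] by (simp add: d_refl)
qed

lemma no_same_level:
  assumes x: "x \<in> carrier G" and y: "y \<in> carrier G" and a: "Adj x z"
  shows "d z y \<noteq> d x y"
proof
  assume eq: "d z y = d x y"
  define i where "i = d x y"
  have z: "z \<in> carrier G" using a adjV by blast
  define N where "N = {z \<in> carrier G. Adj x z}"
  define B where "B = {z \<in> carrier G. Adj x z \<and> d z y = i + 1}"
  define C where "C = {z \<in> carrier G. Adj x z \<and> d z y = i - 1}"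
  have cN: "card N = k" using degree[OF x] N_def by simp
  have i3: "i \<le> 3" using DR(1)[OF x y] i_def by simp
  show False
  proof (cases "i = 0")
    case True
    hence "x = y" using d_0[OF x y] i_def by simp
    hence "d z y = 0" using eq d_refl by simp
    hence "z = y" using d_0[OF z y] by simp
    thus False using a \<open>x = y\<close> adj_irrefl by simp
  next
    case False
    have cC: "card C = [1, \<mu>, k] ! (i - 1)" using DR(3)[OF x y] False C_def i_def by simp
    have cB: "card B = (if i < 3 then [k, k - 1, k - \<mu>] ! i else 0)"
    proof (cases "i < 3")
      case True thus ?thesis using DR(2)[OF x y] B_def i_def by simp
    next
      case f: False
      have "B = {}"
      proof -
        { fix w assume "w \<in> B"
          hence "w \<in> carrier G" "d w y = i + 1" by (auto simp: B_def)
          hence False using DR(1)[of w y] y f i3 by simp }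
        thus ?thesis by blast
      qed
      thus ?thesis using f by simp
    qed
    have sub: "B \<union> C \<subseteq> N" unfolding B_def C_def N_def by auto
    have disj: "B \<inter> C = {}" unfolding B_def C_def by auto
    have fins: "finite B" "finite C" "finite N" unfolding B_def C_def N_def using fin by auto
    have "z \<in> N" using a z N_def by simp
    hence "card N \<noteq> 0" using fins(3) by auto
    hence k1: "k \<ge> 1" using cN by simp
    have "card C \<le> k" using card_mono[OF fins(3)] sub cN by (metis le_sup_iff)
    moreover have "i = 1 \<or> i = 2 \<or> i = 3" using False i3 by auto
    ultimately have "card B + card C = k" using cB cC k1 by (elim disjE) auto
    hence "card (B \<union> C) = card N" using card_Un_disjoint[OF fins(1,2) disj] cN by simp
    hence "B \<union> C = N" using card_subset_eq[OF fins(3) sub] by simp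
    hence "z \<in> B \<union> C" using \<open>z \<in> N\<close> by simp
    thus False using eq False unfolding B_def C_def i_def by auto
  qed
qed

lemma adj_parity:
  assumes "Adj x z" "y \<in> carrier G"
  shows "even (d z y) \<longleftrightarrow> odd (d x y)"
proof -
  have x: "x \<in> carrier G" using assms adjV by blast
  have "d z y \<le> d x y + 1" "d x y \<le> d z y + 1" using d_step[OF assms] d_step[OF adj_sym[OF assms(1)] assms(2)] by auto
  moreover have "d z y \<noteq> d x y" using no_same_level x assms by blast
  ultimately have "d z y = d x y + 1 \<or> d x y = d z y + 1" by linarith
  thus ?thesis by auto
qed

lemma walk_parity:
  "(Adj ^^ n) x u \<Longrightarrow> x \<in> carrier G \<Longrightarrow> w \<in> carrier G \<Longrightarrow>
     (even (d x w) \<longleftrightarrow> (even (d u w) \<longleftrightarrow> even n))"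
proof (induction n arbitrary: u)
  case 0 thus ?case by (auto elim: relpowp_0_E)
next
  case (Suc n)
  from Suc.prems obtain v where v: "(Adj ^^ n) x v" "Adj v u" by (auto elim: relpowp_Suc_E)
  show ?case using Suc.IH[OF v(1) Suc.prems(2,3)] adj_parity[OF v(2) Suc.prems(3)] by auto
qed

end

context drc
begin

interpretation G: group G by (rule grp)

lemma adj_tr: "Adj x y \<Longrightarrow> g \<in> carrier G \<Longrightarrow> Adj (x \<otimes>\<^bsub>G\<^esub> g) (y \<otimes>\<^bsub>G\<^esub> g)"
proof -
  assume a: "Adj x y" "g \<in> carrier G"
  hence xy: "x \<in> carrier G" "y \<in> carrier G" "x \<otimes>\<^bsub>G\<^esub> inv\<^bsub>G\<^esub> y \<in> S" by (auto simp: cay_adj_def)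
  have "(x \<otimes>\<^bsub>G\<^esub> g) \<otimes>\<^bsub>G\<^esub> inv\<^bsub>G\<^esub> (y \<otimes>\<^bsub>G\<^esub> g) = x \<otimes>\<^bsub>G\<^esub> inv\<^bsub>G\<^esub> y"
    using xy a(2) by (simp add: G.inv_mult_group G.m_assoc[symmetric])
      (simp add: G.m_assoc)
  thus ?thesis using xy a(2) by (simp add: cay_adj_def)
qed

lemma walk_tr: "(Adj ^^ n) x y \<Longrightarrow> g \<in> carrier G \<Longrightarrow> (Adj ^^ n) (x \<otimes>\<^bsub>G\<^esub> g) (y \<otimes>\<^bsub>G\<^esub> g)"
proof (induction n arbitrary: y)
  case 0 thus ?case by (auto elim: relpowp_0_E)
next
  case (Suc n)
  from Suc.prems obtain u where "(Adj ^^ n) x u" "Adj u y" by (auto elim: relpowp_Suc_E)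
  thus ?case using Suc.IH Suc.prems(2) adj_tr by (metis relpowp_Suc_I)
qed

definition "HH = {g \<in> carrier G. even (d g \<one>\<^bsub>G\<^esub>)}"

lemma par_mult:
  assumes g: "g \<in> carrier G" and h: "h \<in> carrier G"
  shows "even (d (g \<otimes>\<^bsub>G\<^esub> h) \<one>\<^bsub>G\<^esub>) \<longleftrightarrow> (even (d g \<one>\<^bsub>G\<^esub>) \<longleftrightarrow> even (d h \<one>\<^bsub>G\<^esub>))"
proof -
  have "(Adj ^^ d g \<one>\<^bsub>G\<^esub>) g \<one>\<^bsub>G\<^esub>" using d_walk g by simp
  hence "(Adj ^^ d g \<one>\<^bsub>G\<^esub>) (g \<otimes>\<^bsub>G\<^esub> h) (\<one>\<^bsub>G\<^esub> \<otimes>\<^bsub>G\<^esub> h)" using walk_tr h by blast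
  hence w: "(Adj ^^ d g \<one>\<^bsub>G\<^esub>) (g \<otimes>\<^bsub>G\<^esub> h) h" using h by simp
  show ?thesis using walk_parity[OF w _ G.one_closed] g h by auto
qed

lemma par_inv: "g \<in> carrier G \<Longrightarrow> even (d (inv\<^bsub>G\<^esub> g) \<one>\<^bsub>G\<^esub>) \<longleftrightarrow> even (d g \<one>\<^bsub>G\<^esub>)"
  using par_mult[of g "inv\<^bsub>G\<^esub> g"] by (simp add: d_refl)

lemma H_sub: "subgroup HH G"
proof (rule G.subgroupI)
  show "HH \<subseteq> carrier G" by (auto simp: HH_def)
  have "\<one>\<^bsub>G\<^esub> \<in> HH" by (simp add: HH_def d_refl)
  thus "HH \<noteq> {}" by blast
qed (use par_inv par_mult in \<open>auto simp: HH_def\<close>)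

lemma S_in: "S \<subseteq> carrier G" using Ssub by auto

lemma S_out: "s \<in> S \<Longrightarrow> s \<notin> HH"
proof -
  assume s: "s \<in> S"
  hence "Adj s \<one>\<^bsub>G\<^esub>" using S_in by (auto simp: cay_adj_def)
  hence "d s \<one>\<^bsub>G\<^esub> = 1" using d_1 S_in s by auto
  thus ?thesis by (simp add: HH_def)
qed

lemma out_out: "g \<in> carrier G - HH \<Longrightarrow> h \<in> carrier G - HH \<Longrightarrow> g \<otimes>\<^bsub>G\<^esub> h \<in> HH"
  using par_mult by (auto simp: HH_def)
lemma in_out: "g \<in> HH \<Longrightarrow> h \<in> carrier G - HH \<Longrightarrow> g \<otimes>\<^bsub>G\<^esub> h \<notin> HH"
  using par_mult by (auto simp: HH_def)
lemma out_in: "g \<in> carrier G - HH \<Longrightarrow> h \<in> HH \<Longrightarrow> g \<otimes>\<^bsub>G\<^esub> h \<notin> HH"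
  using par_mult by (auto simp: HH_def)
lemma inv_out: "g \<in> carrier G - HH \<Longrightarrow> inv\<^bsub>G\<^esub> g \<in> carrier G - HH"
  using par_inv by (auto simp: HH_def)

lemma cardS: "card S = k"
proof -
  have "{z \<in> carrier G. Adj \<one>\<^bsub>G\<^esub> z} = S"
  proof
    show "{z \<in> carrier G. Adj \<one>\<^bsub>G\<^esub> z} \<subseteq> S"
    proof
      fix z assume "z \<in> {z \<in> carrier G. Adj \<one>\<^bsub>G\<^esub> z}"
      hence z: "z \<in> carrier G" "inv\<^bsub>G\<^esub> z \<in> S" by (auto simp: cay_adj_def)
      hence "inv\<^bsub>G\<^esub> (inv\<^bsub>G\<^esub> z) \<in> S" using Sinv by blast
      thus "z \<in> S" using z by simp
    qed
    show "S \<subseteq> {z \<in> carrier G. Adj \<one>\<^bsub>G\<^esub> z}"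
      using Sinv S_in by (auto simp: cay_adj_def)
  qed
  thus ?thesis using degree[of "\<one>\<^bsub>G\<^esub>"] by simp
qed

lemma c2:
  assumes x: "x \<in> HH" "x \<noteq> \<one>\<^bsub>G\<^esub>"
  shows "card {z \<in> S. x \<otimes>\<^bsub>G\<^esub> inv\<^bsub>G\<^esub> z \<in> S} = \<mu>"
proof -
  have xV: "x \<in> carrier G" using x HH_def by auto
  have "d x \<one>\<^bsub>G\<^esub> \<noteq> 0" using d_0 xV x(2) by blast
  moreover have "even (d x \<one>\<^bsub>G\<^esub>)" "d x \<one>\<^bsub>G\<^esub> \<le> 3" using x DR(1)[OF xV G.one_closed] HH_def by auto
  ultimately have d2: "d x \<one>\<^bsub>G\<^esub> = 2"
  proof -
    assume a: "d x \<one>\<^bsub>G\<^esub> \<noteq> 0" "even (d x \<one>\<^bsub>G\<^esub>)" "d x \<one>\<^bsub>G\<^esub> \<le> 3"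
    from a(2) obtain j where j: "d x \<one>\<^bsub>G\<^esub> = 2 * j" by (rule evenE)
    hence "j = 1" using a(1,3) by simp
    thus ?thesis using j by simp
  qed
  have "{z \<in> carrier G. Adj x z \<and> d z \<one>\<^bsub>G\<^esub> = d x \<one>\<^bsub>G\<^esub> - 1} = {z \<in> S. x \<otimes>\<^bsub>G\<^esub> inv\<^bsub>G\<^esub> z \<in> S}"
  proof -
    have "\<And>z. z \<in> carrier G \<Longrightarrow> d z \<one>\<^bsub>G\<^esub> = 1 \<longleftrightarrow> z \<in> S"
      using d_1 by (auto simp: cay_adj_def)
    thus ?thesis using d2 S_in xV by (auto simp: cay_adj_def)
  qed
  thus ?thesis using DR(3)[OF xV G.one_closed] d2 by simp
qed

lemma mu_lt: "\<mu> < k"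
proof -
  obtain x y where xy: "x \<in> carrier G" "y \<in> carrier G" "d x y = 3" using diam by blast
  have "(Adj ^^ Suc 2) x y" using d_walk[OF xy(1,2)] xy(3) by (simp add: numeral_3_eq_3)
  then obtain z where z: "Adj x z" "(Adj ^^ 2) z y" using relpowp_Suc_D2 by metis
  have zV: "z \<in> carrier G" using z adjV by blast
  have "d z y \<le> 2" using d_le z by blast
  moreover have "d x y \<le> d z y + 1" using d_step[OF adj_sym[OF z(1)] xy(2)] .
  ultimately have dz: "d z y = 2" using xy by simp
  have "x \<in> {w \<in> carrier G. Adj z w \<and> d w y = d z y + 1}" using xy dz adj_sym[OF z(1)] by simp
  hence "card {w \<in> carrier G. Adj z w \<and> d w y = d z y + 1} \<noteq> 0" using fin by auto
  thus ?thesis using DR(2)[OF zV xy(2)] dz by simp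
qed

end

locale constr =
  fixes G :: "('a, 'b) monoid_scheme" and S H E :: "'a set" and \<phi> \<psi> :: "'a \<Rightarrow> 'a"
  assumes grp: "group G" and Hs: "subgroup H G"
    and S_in: "S \<subseteq> carrier G" and SH: "S \<inter> H = {}" and Sinv: "\<forall>s\<in>S. inv\<^bsub>G\<^esub> s \<in> S"
    and oo: "\<And>g h. g \<in> carrier G - H \<Longrightarrow> h \<in> carrier G - H \<Longrightarrow> g \<otimes>\<^bsub>G\<^esub> inv\<^bsub>G\<^esub> h \<in> H"
    and phi_hom: "\<And>x y. x \<in> H \<Longrightarrow> y \<in> H \<Longrightarrow> \<phi> (x \<otimes>\<^bsub>G\<^esub> y) = \<phi> x \<otimes>\<^bsub>G\<^esub> \<phi> y"
    and phi_H: "\<And>x. x \<in> H \<Longrightarrow> \<phi> x \<in> H"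
    and phi_phi: "\<And>x. x \<in> H \<Longrightarrow> \<phi> (\<phi> x) = x"
    and E_H: "E \<subseteq> H" and E_inv: "\<And>e. e \<in> E \<Longrightarrow> inv\<^bsub>G\<^esub> (\<phi> e) \<in> E"
    and psi: "bij_betw \<psi> (carrier G - H) H"
    and key: "\<And>h g. h \<in> H \<Longrightarrow> g \<in> carrier G - H \<Longrightarrow>
                (h \<otimes>\<^bsub>G\<^esub> inv\<^bsub>G\<^esub> g \<in> S \<longleftrightarrow> h \<otimes>\<^bsub>G\<^esub> inv\<^bsub>G\<^esub> (\<phi> (\<psi> g)) \<in> E)"
begin

interpretation G: group G by (rule grp)

lemma HG: "x \<in> H \<Longrightarrow> x \<in> carrier G" using subgroup.subset[OF Hs] by blast
lemma Hm: "x \<in> H \<Longrightarrow> y \<in> H \<Longrightarrow> x \<otimes>\<^bsub>G\<^esub> y \<in> H" by (rule subgroup.m_closed[OF Hs])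
lemma Hi: "x \<in> H \<Longrightarrow> inv\<^bsub>G\<^esub> x \<in> H" by (rule subgroup.m_inv_closed[OF Hs])
lemma H1: "\<one>\<^bsub>G\<^esub> \<in> H" by (rule subgroup.one_closed[OF Hs])

lemma phi1: "\<phi> \<one>\<^bsub>G\<^esub> = \<one>\<^bsub>G\<^esub>"
proof -
  have "\<phi> \<one>\<^bsub>G\<^esub> \<otimes>\<^bsub>G\<^esub> \<phi> \<one>\<^bsub>G\<^esub> = \<phi> (\<one>\<^bsub>G\<^esub> \<otimes>\<^bsub>G\<^esub> \<one>\<^bsub>G\<^esub>)" using phi_hom[OF H1 H1] by (rule sym)
  also have "\<dots> = \<phi> \<one>\<^bsub>G\<^esub>" by (simp only: G.l_one[OF G.one_closed])
  finally have "\<phi> \<one>\<^bsub>G\<^esub> \<otimes>\<^bsub>G\<^esub> \<phi> \<one>\<^bsub>G\<^esub> = \<phi> \<one>\<^bsub>G\<^esub>" .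
  moreover have c: "\<phi> \<one>\<^bsub>G\<^esub> \<in> carrier G" using HG phi_H H1 by blast
  ultimately show ?thesis using G.l_cancel_one[OF c c] by blast
qed

lemma phiinv: "x \<in> H \<Longrightarrow> \<phi> (inv\<^bsub>G\<^esub> x) = inv\<^bsub>G\<^esub> (\<phi> x)"
proof -
  assume x: "x \<in> H"
  have "\<phi> (inv\<^bsub>G\<^esub> x) \<otimes>\<^bsub>G\<^esub> \<phi> x = \<phi> (inv\<^bsub>G\<^esub> x \<otimes>\<^bsub>G\<^esub> x)"
    using phi_hom[OF Hi[OF x] x] by (rule sym)
  also have "\<dots> = \<one>\<^bsub>G\<^esub>" using x HG phi1 by simp
  finally have e: "\<phi> (inv\<^bsub>G\<^esub> x) \<otimes>\<^bsub>G\<^esub> \<phi> x = \<one>\<^bsub>G\<^esub>" .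
  have "\<phi> x \<in> carrier G" "\<phi> (inv\<^bsub>G\<^esub> x) \<in> carrier G" using x HG phi_H Hi by auto
  thus ?thesis using G.inv_equality[OF e] by simp
qed

definition "SD = semidirect_Z2 (G\<lparr>carrier := H\<rparr>) \<phi>"

lemma SDc: "carrier SD = H \<times> UNIV" by (simp add: SD_def semidirect_Z2_def)
lemma SDm: "(h1, a) \<otimes>\<^bsub>SD\<^esub> (h2, b) = (h1 \<otimes>\<^bsub>G\<^esub> (if a then \<phi> h2 else h2), a \<noteq> b)"
  by (simp add: SD_def semidirect_Z2_def)
lemma SD1: "\<one>\<^bsub>SD\<^esub> = (\<one>\<^bsub>G\<^esub>, False)" by (simp add: SD_def semidirect_Z2_def)

lemma SDg: "group SD"
proof (rule groupI)
  fix x y assume "x \<in> carrier SD" "y \<in> carrier SD"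
  then obtain h1 a h2 b where "x = (h1, a)" "y = (h2, b)" "h1 \<in> H" "h2 \<in> H" using SDc by auto
  thus "x \<otimes>\<^bsub>SD\<^esub> y \<in> carrier SD" using SDc SDm Hm phi_H by auto
next
  show "\<one>\<^bsub>SD\<^esub> \<in> carrier SD" using SDc SD1 H1 by simp
next
  fix x y z assume "x \<in> carrier SD" "y \<in> carrier SD" "z \<in> carrier SD"
  then obtain h1 a h2 b h3 c where xyz: "x = (h1, a)" "y = (h2, b)" "z = (h3, c)"
    "h1 \<in> H" "h2 \<in> H" "h3 \<in> H" using SDc by auto
  have hom: "\<phi> (h2 \<otimes>\<^bsub>G\<^esub> \<phi> h3) = \<phi> h2 \<otimes>\<^bsub>G\<^esub> h3" "\<phi> (h2 \<otimes>\<^bsub>G\<^esub> h3) = \<phi> h2 \<otimes>\<^bsub>G\<^esub> \<phi> h3"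
    using phi_hom xyz phi_H phi_phi by auto
  have c: "h1 \<in> carrier G" "h2 \<in> carrier G" "h3 \<in> carrier G" "\<phi> h2 \<in> carrier G" "\<phi> h3 \<in> carrier G"
    using xyz HG phi_H by auto
  show "x \<otimes>\<^bsub>SD\<^esub> y \<otimes>\<^bsub>SD\<^esub> z = x \<otimes>\<^bsub>SD\<^esub> (y \<otimes>\<^bsub>SD\<^esub> z)"
    using xyz(1-3) c hom xyz(6) phi_phi by (cases a; cases b; cases c) (simp_all add: SDm G.m_assoc)
next
  fix x assume "x \<in> carrier SD"
  then obtain h a where "x = (h, a)" "h \<in> H" using SDc by auto
  thus "\<one>\<^bsub>SD\<^esub> \<otimes>\<^bsub>SD\<^esub> x = x" using SDm SD1 HG by simp
next
  fix x assume "x \<in> carrier SD"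
  then obtain h a where x: "x = (h, a)" "h \<in> H" using SDc by auto
  define y where "y = (if a then \<phi> (inv\<^bsub>G\<^esub> h) else inv\<^bsub>G\<^esub> h, a)"
  have "y \<in> carrier SD" using SDc y_def x phi_H Hi by auto
  moreover have "y \<otimes>\<^bsub>SD\<^esub> x = \<one>\<^bsub>SD\<^esub>"
  proof (cases a)
    case True
    have "\<phi> (inv\<^bsub>G\<^esub> h) \<otimes>\<^bsub>G\<^esub> \<phi> h = \<one>\<^bsub>G\<^esub>" using phiinv x HG phi_H by simp
    thus ?thesis using True x y_def SDm SD1 by simp
  next
    case False
    thus ?thesis using x y_def SDm SD1 HG by simp
  qed
  ultimately show "\<exists>y\<in>carrier SD. y \<otimes>\<^bsub>SD\<^esub> x = \<one>\<^bsub>SD\<^esub>" by blast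
qed

lemma SDinv: "h \<in> H \<Longrightarrow> inv\<^bsub>SD\<^esub> (h, a) = (if a then \<phi> (inv\<^bsub>G\<^esub> h) else inv\<^bsub>G\<^esub> h, a)"
proof -
  assume h: "h \<in> H"
  have m: "(if a then \<phi> (inv\<^bsub>G\<^esub> h) else inv\<^bsub>G\<^esub> h, a) \<otimes>\<^bsub>SD\<^esub> (h, a) = \<one>\<^bsub>SD\<^esub>"
  proof (cases a)
    case True
    have "\<phi> (inv\<^bsub>G\<^esub> h) \<otimes>\<^bsub>G\<^esub> \<phi> h = \<one>\<^bsub>G\<^esub>" using phiinv h HG phi_H by simp
    thus ?thesis using True SDm SD1 by simp
  next
    case False
    thus ?thesis using h SDm SD1 HG by simp
  qed
  show ?thesis
    by (rule group.inv_equality[OF SDg m]) (use h SDc phi_H Hi in auto)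
qed

definition "T = E \<times> {True}"
definition "f g = (if g \<in> H then (g, False) else (\<psi> g, True))" for g
definition "f' p = (if snd p then inv_into (carrier G - H) \<psi> (fst p) else fst p)" for p

lemma iso: "\<phi> \<in> iso (G\<lparr>carrier := H\<rparr>) (G\<lparr>carrier := H\<rparr>)"
proof -
  have "bij_betw \<phi> H H" by (rule bij_betw_byWitness[of H \<phi> \<phi>]) (use phi_phi phi_H in auto)
  thus ?thesis unfolding iso_def hom_def using phi_hom phi_H by auto
qed

lemma Tsub: "T \<subseteq> carrier SD - {\<one>\<^bsub>SD\<^esub>}" using E_H SDc SD1 T_def by auto

lemma Tinv: "\<forall>t\<in>T. inv\<^bsub>SD\<^esub> t \<in> T"
proof
  fix t assume "t \<in> T"
  then obtain e where e: "t = (e, True)" "e \<in> E" using T_def by auto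
  have "e \<in> H" using e E_H by auto
  hence "inv\<^bsub>SD\<^esub> t = (inv\<^bsub>G\<^esub> (\<phi> e), True)" using e SDinv phiinv by simp
  thus "inv\<^bsub>SD\<^esub> t \<in> T" using E_inv e T_def by simp
qed

lemma psiH: "g \<in> carrier G - H \<Longrightarrow> \<psi> g \<in> H" by (rule bij_betw_apply[OF psi])

lemma psi_inv: "h \<in> H \<Longrightarrow> inv_into (carrier G - H) \<psi> h \<in> carrier G - H"
proof -
  assume "h \<in> H"
  hence "h \<in> \<psi> ` (carrier G - H)" using psi by (simp add: bij_betw_def)
  thus ?thesis by (rule inv_into_into)
qed

lemma bij: "bij_betw f (carrier G) (carrier SD)"
proof (rule bij_betw_byWitness[of _ f'])
  show "\<forall>a\<in>carrier G. f' (f a) = a"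
    using psi by (auto simp: f_def f'_def bij_betw_inv_into_left)
  show "\<forall>a'\<in>carrier SD. f (f' a') = a'"
  proof
    fix p assume "p \<in> carrier SD"
    then obtain h b where p: "p = (h, b)" "h \<in> H" using SDc by auto
    show "f (f' p) = p" using p psi psi_inv[OF p(2)] by (auto simp: f_def f'_def bij_betw_inv_into_right)
  qed
  show "f ` carrier G \<subseteq> carrier SD" using psiH SDc by (auto simp: f_def)
  show "f' ` carrier SD \<subseteq> carrier G"
  proof
    fix q assume "q \<in> f' ` carrier SD"
    then obtain h b where p: "q = f' (h, b)" "h \<in> H" using SDc by auto
    thus "q \<in> carrier G" using p HG psi_inv[OF p(2)] by (auto simp: f'_def)
  qed
qed

lemma Einv2: "e \<in> H \<Longrightarrow> e \<in> E \<longleftrightarrow> inv\<^bsub>G\<^esub> (\<phi> e) \<in> E"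
proof -
  assume e: "e \<in> H"
  have "inv\<^bsub>G\<^esub> (\<phi> (inv\<^bsub>G\<^esub> (\<phi> e))) = e" using e phiinv phi_H phi_phi HG by simp
  thus "e \<in> E \<longleftrightarrow> inv\<^bsub>G\<^esub> (\<phi> e) \<in> E" using E_inv[of "inv\<^bsub>G\<^esub> (\<phi> e)"] E_inv[of e] by auto
qed

lemma fH: "x \<in> H \<Longrightarrow> f x = (x, False)" by (simp add: f_def)
lemma fO: "x \<notin> H \<Longrightarrow> f x = (\<psi> x, True)" by (simp add: f_def)

lemma adjSD: "p \<in> carrier SD \<Longrightarrow> q \<in> carrier SD \<Longrightarrow> cay_adj SD T p q \<longleftrightarrow> p \<otimes>\<^bsub>SD\<^esub> inv\<^bsub>SD\<^esub> q \<in> T"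
  by (simp add: cay_adj_def)

lemma adj_HH: "x \<in> H \<Longrightarrow> y \<in> H \<Longrightarrow> cay_adj G S x y \<longleftrightarrow> cay_adj SD T (f x) (f y)"
proof -
  assume x: "x \<in> H" and y: "y \<in> H"
  have "x \<otimes>\<^bsub>G\<^esub> inv\<^bsub>G\<^esub> y \<in> H" using Hm Hi x y by blast
  hence "x \<otimes>\<^bsub>G\<^esub> inv\<^bsub>G\<^esub> y \<notin> S" using SH by blast
  hence l: "\<not> cay_adj G S x y" by (simp add: cay_adj_def)
  have "(x, False) \<otimes>\<^bsub>SD\<^esub> inv\<^bsub>SD\<^esub> (y, False) = (x \<otimes>\<^bsub>G\<^esub> inv\<^bsub>G\<^esub> y, False)"
    using SDinv[OF y, of False] SDm by simp
  hence "\<not> cay_adj SD T (f x) (f y)" using fH x y by (simp add: cay_adj_def T_def)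
  thus ?thesis using l by blast
qed

lemma adj_OO: "x \<in> carrier G - H \<Longrightarrow> y \<in> carrier G - H \<Longrightarrow> cay_adj G S x y \<longleftrightarrow> cay_adj SD T (f x) (f y)"
proof -
  assume x: "x \<in> carrier G - H" and y: "y \<in> carrier G - H"
  have "x \<otimes>\<^bsub>G\<^esub> inv\<^bsub>G\<^esub> y \<in> H" using oo x y by blast
  hence "x \<otimes>\<^bsub>G\<^esub> inv\<^bsub>G\<^esub> y \<notin> S" using SH by blast
  hence l: "\<not> cay_adj G S x y" by (simp add: cay_adj_def)
  have py: "\<psi> y \<in> H" using psiH y by blast
  have "snd ((\<psi> x, True) \<otimes>\<^bsub>SD\<^esub> inv\<^bsub>SD\<^esub> (\<psi> y, True)) = False"
    using SDinv[OF py, of True] SDm by simp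
  hence "\<not> cay_adj SD T (f x) (f y)" using fO x y by (auto simp add: cay_adj_def T_def)
  thus ?thesis using l by blast
qed

lemma adj_HO: "x \<in> H \<Longrightarrow> y \<in> carrier G - H \<Longrightarrow> cay_adj G S x y \<longleftrightarrow> cay_adj SD T (f x) (f y)"
proof -
  assume x: "x \<in> H" and y: "y \<in> carrier G - H"
  have py: "\<psi> y \<in> H" using psiH y by blast
  have fx: "f x \<in> carrier SD" "f y \<in> carrier SD" using fH fO x y py SDc by auto
  have e: "(x, False) \<otimes>\<^bsub>SD\<^esub> inv\<^bsub>SD\<^esub> (\<psi> y, True) = (x \<otimes>\<^bsub>G\<^esub> \<phi> (inv\<^bsub>G\<^esub> (\<psi> y)), True)"
    using SDinv[OF py, of True] SDm by simp
  have "cay_adj SD T (f x) (f y) \<longleftrightarrow> f x \<otimes>\<^bsub>SD\<^esub> inv\<^bsub>SD\<^esub> (f y) \<in> T" by (rule adjSD[OF fx])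
  also have "\<dots> \<longleftrightarrow> x \<otimes>\<^bsub>G\<^esub> \<phi> (inv\<^bsub>G\<^esub> (\<psi> y)) \<in> E"
    using e fH[OF x] fO y by (simp add: T_def)
  also have "\<dots> \<longleftrightarrow> x \<otimes>\<^bsub>G\<^esub> inv\<^bsub>G\<^esub> (\<phi> (\<psi> y)) \<in> E" using phiinv[OF py] by simp
  also have "\<dots> \<longleftrightarrow> x \<otimes>\<^bsub>G\<^esub> inv\<^bsub>G\<^esub> y \<in> S" using key[OF x y] by simp
  also have "\<dots> \<longleftrightarrow> cay_adj G S x y" using HG[OF x] y by (simp add: cay_adj_def)
  finally show ?thesis by simp
qed

lemma inv_swap: "x \<in> carrier G \<Longrightarrow> y \<in> carrier G \<Longrightarrow> x \<otimes>\<^bsub>G\<^esub> inv\<^bsub>G\<^esub> y \<in> S \<longleftrightarrow> y \<otimes>\<^bsub>G\<^esub> inv\<^bsub>G\<^esub> x \<in> S"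
proof -
  assume x: "x \<in> carrier G" and y: "y \<in> carrier G"
  have "inv\<^bsub>G\<^esub> (x \<otimes>\<^bsub>G\<^esub> inv\<^bsub>G\<^esub> y) = y \<otimes>\<^bsub>G\<^esub> inv\<^bsub>G\<^esub> x"
       "inv\<^bsub>G\<^esub> (y \<otimes>\<^bsub>G\<^esub> inv\<^bsub>G\<^esub> x) = x \<otimes>\<^bsub>G\<^esub> inv\<^bsub>G\<^esub> y"
    using x y by (simp_all add: G.inv_mult_group)
  thus ?thesis using Sinv by metis
qed

lemma adj_OH: "x \<in> carrier G - H \<Longrightarrow> y \<in> H \<Longrightarrow> cay_adj G S x y \<longleftrightarrow> cay_adj SD T (f x) (f y)"
proof -
  assume x: "x \<in> carrier G - H" and y: "y \<in> H"
  have px: "\<psi> x \<in> H" using psiH x by blast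
  have fx: "f x \<in> carrier SD" "f y \<in> carrier SD" using fH fO x y px SDc by auto
  have iy: "inv\<^bsub>G\<^esub> y \<in> H" using Hi y by blast
  have e: "(\<psi> x, True) \<otimes>\<^bsub>SD\<^esub> inv\<^bsub>SD\<^esub> (y, False) = (\<psi> x \<otimes>\<^bsub>G\<^esub> \<phi> (inv\<^bsub>G\<^esub> y), True)"
    using SDinv[OF y, of False] SDm by simp
  have "cay_adj SD T (f x) (f y) \<longleftrightarrow> f x \<otimes>\<^bsub>SD\<^esub> inv\<^bsub>SD\<^esub> (f y) \<in> T" by (rule adjSD[OF fx])
  also have "\<dots> \<longleftrightarrow> \<psi> x \<otimes>\<^bsub>G\<^esub> \<phi> (inv\<^bsub>G\<^esub> y) \<in> E"
    using e fO x fH[OF y] by (simp add: T_def)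
  also have "\<dots> \<longleftrightarrow> inv\<^bsub>G\<^esub> (\<phi> (\<psi> x \<otimes>\<^bsub>G\<^esub> \<phi> (inv\<^bsub>G\<^esub> y))) \<in> E"
    by (rule Einv2[OF Hm[OF px phi_H[OF iy]]])
  also have "inv\<^bsub>G\<^esub> (\<phi> (\<psi> x \<otimes>\<^bsub>G\<^esub> \<phi> (inv\<^bsub>G\<^esub> y))) = y \<otimes>\<^bsub>G\<^esub> inv\<^bsub>G\<^esub> (\<phi> (\<psi> x))"
  proof -
    have "\<phi> (\<psi> x \<otimes>\<^bsub>G\<^esub> \<phi> (inv\<^bsub>G\<^esub> y)) = \<phi> (\<psi> x) \<otimes>\<^bsub>G\<^esub> \<phi> (\<phi> (inv\<^bsub>G\<^esub> y))"
      by (rule phi_hom[OF px phi_H[OF iy]])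
    also have "\<dots> = \<phi> (\<psi> x) \<otimes>\<^bsub>G\<^esub> inv\<^bsub>G\<^esub> y" using phi_phi[OF iy] by simp
    finally have e: "\<phi> (\<psi> x \<otimes>\<^bsub>G\<^esub> \<phi> (inv\<^bsub>G\<^esub> y)) = \<phi> (\<psi> x) \<otimes>\<^bsub>G\<^esub> inv\<^bsub>G\<^esub> y" .
    have c: "\<phi> (\<psi> x) \<in> carrier G" "y \<in> carrier G" using px phi_H HG y by auto
    show ?thesis unfolding e using c by (simp add: G.inv_mult_group)
  qed
  also have "\<dots> \<in> E \<longleftrightarrow> y \<otimes>\<^bsub>G\<^esub> inv\<^bsub>G\<^esub> x \<in> S" using key[OF y x] by simp
  also have "\<dots> \<longleftrightarrow> x \<otimes>\<^bsub>G\<^esub> inv\<^bsub>G\<^esub> y \<in> S" using inv_swap HG[OF y] x by blast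
  also have "\<dots> \<longleftrightarrow> cay_adj G S x y" using HG[OF y] x by (simp add: cay_adj_def)
  finally show ?thesis by simp
qed

lemma adj: "x \<in> carrier G \<Longrightarrow> y \<in> carrier G \<Longrightarrow> cay_adj G S x y \<longleftrightarrow> cay_adj SD T (f x) (f y)"
  using adj_HH adj_HO adj_OH adj_OO by blast

lemma result:
  "\<exists>\<phi> T. \<phi> \<in> iso (G\<lparr>carrier := H\<rparr>) (G\<lparr>carrier := H\<rparr>) \<and> (\<forall>h\<in>H. \<phi> (\<phi> h) = h) \<and>
           T \<subseteq> carrier (semidirect_Z2 (G\<lparr>carrier := H\<rparr>) \<phi>) - {\<one>\<^bsub>semidirect_Z2 (G\<lparr>carrier := H\<rparr>) \<phi>\<^esub>} \<and>
           (\<forall>t\<in>T. inv\<^bsub>semidirect_Z2 (G\<lparr>carrier := H\<rparr>) \<phi>\<^esub> t \<in> T) \<and>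
           graph_iso (carrier G) (cay_adj G S)
             (carrier (semidirect_Z2 (G\<lparr>carrier := H\<rparr>) \<phi>)) (cay_adj (semidirect_Z2 (G\<lparr>carrier := H\<rparr>) \<phi>) T)"
proof -
  have gi: "graph_iso (carrier G) (cay_adj G S) (carrier SD) (cay_adj SD T)"
    unfolding graph_iso_def using bij adj by (intro exI[of _ f]) simp
  have "\<phi> \<in> iso (G\<lparr>carrier := H\<rparr>) (G\<lparr>carrier := H\<rparr>) \<and> (\<forall>h\<in>H. \<phi> (\<phi> h) = h) \<and>
           T \<subseteq> carrier SD - {\<one>\<^bsub>SD\<^esub>} \<and> (\<forall>t\<in>T. inv\<^bsub>SD\<^esub> t \<in> T) \<and>
           graph_iso (carrier G) (cay_adj G S) (carrier SD) (cay_adj SD T)"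
    using iso phi_phi Tsub Tinv gi by simp
  thus ?thesis unfolding SD_def by (intro exI[of _ \<phi>] exI[of _ T])
qed

end

lemma invol_even:
  assumes "finite A" "\<forall>x\<in>A. f x \<in> A \<and> f (f x) = x \<and> f x \<noteq> x"
  shows "even (card A)"
  using assms
proof (induction "card A" arbitrary: A rule: less_induct)
  case less
  show ?case
  proof (cases "A = {}")
    case True thus ?thesis by simp
  next
    case False
    then obtain x where x: "x \<in> A" by blast
    define A' where "A' = A - {x, f x}"
    have fx: "f x \<in> A" "f x \<noteq> x" using less.prems x by auto
    have cA: "card A' = card A - 2" using A'_def x fx less.prems(1) by (simp add: card_Diff_subset)
    have cA2: "card A \<ge> 2"
    proof -
      have "{x, f x} \<subseteq> A" using x fx by auto
      hence "card {x, f x} \<le> card A" using less.prems(1) card_mono by blast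
      thus ?thesis using fx by simp
    qed
    have "\<forall>y\<in>A'. f y \<in> A' \<and> f (f y) = y \<and> f y \<noteq> y"
      using less.prems(2) fx x unfolding A'_def by (metis Diff_iff insert_iff singletonD)
    moreover have "finite A'" using A'_def less.prems(1) by simp
    moreover have "card A' < card A" using cA cA2 by simp
    ultimately have "even (card A')" using less.hyps by blast
    thus ?thesis using cA cA2 by (metis add_diff_inverse_nat even_add not_less dvd_refl)
  qed
qed

lemma sign_involution_mult:
  assumes grp: "group G" and t: "t \<in> carrier G" and tt: "t \<otimes>\<^bsub>G\<^esub> t = \<one>\<^bsub>G\<^esub>" and t1: "t \<noteq> \<one>\<^bsub>G\<^esub>"
    and "finite A" "A \<subseteq> carrier G" "\<forall>x\<in>A. t \<otimes>\<^bsub>G\<^esub> x \<in> A"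
  shows "permutation (\<lambda>x. if x \<in> A then t \<otimes>\<^bsub>G\<^esub> x else x) \<and>
         sign (\<lambda>x. if x \<in> A then t \<otimes>\<^bsub>G\<^esub> x else x) = (-1) ^ (card A div 2)"
  using assms(5-7)
proof (induction "card A" arbitrary: A rule: less_induct)
  case less
  interpret G: group G by (rule grp)
  have tinv: "\<And>x. x \<in> carrier G \<Longrightarrow> t \<otimes>\<^bsub>G\<^esub> (t \<otimes>\<^bsub>G\<^esub> x) = x"
    using t tt by (simp add: G.m_assoc[symmetric])
  have tne: "\<And>x. x \<in> carrier G \<Longrightarrow> t \<otimes>\<^bsub>G\<^esub> x \<noteq> x" using t t1 by simp
  show ?case
  proof (cases "A = {}")
    case True
    have "(\<lambda>x. if x \<in> A then t \<otimes>\<^bsub>G\<^esub> x else x) = id" using True by auto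
    thus ?thesis using True by simp
  next
    case False
    then obtain x where x: "x \<in> A" by blast
    have xG: "x \<in> carrier G" using x less.prems by auto
    define y where "y = t \<otimes>\<^bsub>G\<^esub> x"
    define A' where "A' = A - {x, y}"
    have y: "y \<in> A" "y \<noteq> x" using less.prems x xG tne y_def by auto
    have cA: "card A' = card A - 2" using A'_def x y less.prems(1) by (simp add: card_Diff_subset)
    have cA2: "card A \<ge> 2"
    proof -
      have "{x, y} \<subseteq> A" using x y by auto
      hence "card {x, y} \<le> card A" using less.prems(1) card_mono by blast
      thus ?thesis using y by simp
    qed
    have xy: "t \<otimes>\<^bsub>G\<^esub> y = x" using y_def tinv xG by simp
    have cl: "\<forall>z\<in>A'. t \<otimes>\<^bsub>G\<^esub> z \<in> A'"
    proof
      fix z assume z: "z \<in> A'"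
      hence zA: "z \<in> A" "z \<noteq> x" "z \<noteq> y" using A'_def by auto
      have zG: "z \<in> carrier G" using zA less.prems by auto
      have "t \<otimes>\<^bsub>G\<^esub> z \<noteq> x" using zA(3) y_def tinv zG by metis
      moreover have "t \<otimes>\<^bsub>G\<^esub> z \<noteq> y" using zA(2) xy tinv zG by metis
      ultimately show "t \<otimes>\<^bsub>G\<^esub> z \<in> A'" using less.prems(3) zA A'_def by auto
    qed
    have IH: "permutation (\<lambda>x. if x \<in> A' then t \<otimes>\<^bsub>G\<^esub> x else x) \<and>
         sign (\<lambda>x. if x \<in> A' then t \<otimes>\<^bsub>G\<^esub> x else x) = (-1) ^ (card A' div 2)"
      using less.hyps[of A'] cA cA2 cl less.prems A'_def by auto
    have eq: "(\<lambda>x. if x \<in> A then t \<otimes>\<^bsub>G\<^esub> x else x) =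
              transpose x y \<circ> (\<lambda>x. if x \<in> A' then t \<otimes>\<^bsub>G\<^esub> x else x)"
    proof
      fix z
      show "(if z \<in> A then t \<otimes>\<^bsub>G\<^esub> z else z) =
            (transpose x y \<circ> (\<lambda>x. if x \<in> A' then t \<otimes>\<^bsub>G\<^esub> x else x)) z"
      proof (cases "z \<in> A'")
        case True
        hence "t \<otimes>\<^bsub>G\<^esub> z \<in> A'" using cl by blast
        hence "t \<otimes>\<^bsub>G\<^esub> z \<noteq> x" "t \<otimes>\<^bsub>G\<^esub> z \<noteq> y" using A'_def by auto
        thus ?thesis using True A'_def by (simp add: transpose_def)
      next
        case False
        show ?thesis
        proof (cases "z = x")
          case True thus ?thesis using x y_def y False by (simp add: transpose_def)
        next
          case zx: False
          show ?thesis
          proof (cases "z = y")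
            case True thus ?thesis using y xy zx False by (simp add: transpose_def)
          next
            case zy: False
            hence "z \<notin> A" using False zx A'_def by auto
            thus ?thesis using zx zy False by (simp add: transpose_def)
          qed
        qed
      qed
    qed
    have card_eq: "card A div 2 = Suc (card A' div 2)" using cA cA2 by simp
    have "permutation (transpose x y)" by (rule permutation_swap_id)
    hence "permutation (\<lambda>x. if x \<in> A then t \<otimes>\<^bsub>G\<^esub> x else x)"
      unfolding eq using permutation_compose IH by blast
    moreover have "sign (\<lambda>x. if x \<in> A then t \<otimes>\<^bsub>G\<^esub> x else x) = (-1) ^ (card A div 2)"
    proof -
      have sw: "sign (transpose x y) = -1" using sign_swap_id[of x y] y(2) by simp
      show ?thesis unfolding eq card_eq using IH sign_compose[OF permutation_swap_id, of _ x y] sw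
        by simp
    qed
    ultimately show ?thesis by blast
  qed
qed

context drc
begin

interpretation G: group G by (rule grp)

lemma HH_sub: "HH \<subseteq> carrier G" by (auto simp: HH_def)
lemma HH_fin: "finite HH" using fin HH_sub finite_subset by blast

lemma sq_pow: "a \<in> carrier G \<Longrightarrow> a [^]\<^bsub>G\<^esub> (2 * n :: nat) = (a \<otimes>\<^bsub>G\<^esub> a) [^]\<^bsub>G\<^esub> n"
proof -
  assume a: "a \<in> carrier G"
  have "a [^]\<^bsub>G\<^esub> (2::nat) = a \<otimes>\<^bsub>G\<^esub> a" using a by (simp add: numeral_2_eq_2)
  thus ?thesis using a by (simp add: G.nat_pow_pow[symmetric])
qed

lemma pow_in_HH: "x \<in> HH \<Longrightarrow> x [^]\<^bsub>G\<^esub> (n::nat) \<in> HH"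
  using H_sub by (induction n) (auto intro: subgroup.m_closed subgroup.one_closed)

lemma pow_out:
  assumes K: "subgroup K G" "K \<subseteq> HH" "odd (card K)"
    and a: "a \<in> carrier G - HH" "a \<otimes>\<^bsub>G\<^esub> a \<in> K"
  shows "\<exists>b\<in>carrier G - HH. b \<otimes>\<^bsub>G\<^esub> b = \<one>\<^bsub>G\<^esub>"
proof -
  define n where "n = card K"
  interpret K: group "G\<lparr>carrier := K\<rparr>" using subgroup.subgroup_is_group[OF K(1) grp] .
  have "(a \<otimes>\<^bsub>G\<^esub> a) [^]\<^bsub>G\<lparr>carrier := K\<rparr>\<^esub> (order (G\<lparr>carrier := K\<rparr>)) = \<one>\<^bsub>G\<lparr>carrier := K\<rparr>\<^esub>"
    using K.pow_order_eq_1 a(2) by simp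
  hence e: "(a \<otimes>\<^bsub>G\<^esub> a) [^]\<^bsub>G\<^esub> n = \<one>\<^bsub>G\<^esub>"
    by (simp add: order_def n_def G.nat_pow_consistent[symmetric])
  define b where "b = a [^]\<^bsub>G\<^esub> n"
  have aG: "a \<in> carrier G" using a by auto
  have bb: "b \<otimes>\<^bsub>G\<^esub> b = \<one>\<^bsub>G\<^esub>"
    using e aG unfolding b_def by (simp add: G.nat_pow_mult sq_pow[symmetric] mult_2)
  obtain j where j: "n = Suc (2 * j)" using assms(3) n_def oddE by (metis Suc_eq_plus1)
  have "b = (a \<otimes>\<^bsub>G\<^esub> a) [^]\<^bsub>G\<^esub> j \<otimes>\<^bsub>G\<^esub> a" unfolding b_def j using aG by (simp add: sq_pow)
  moreover have "(a \<otimes>\<^bsub>G\<^esub> a) [^]\<^bsub>G\<^esub> j \<in> HH" using pow_in_HH a K by blast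
  ultimately have "b \<notin> HH" using in_out a by simp
  moreover have "b \<in> carrier G" using b_def aG by simp
  ultimately show ?thesis using bb by blast
qed

lemma S_nonempty: "S \<noteq> {}" using cardS mu_lt by auto

lemma case_odd_k: "odd k \<Longrightarrow> \<exists>b\<in>carrier G - HH. b \<otimes>\<^bsub>G\<^esub> b = \<one>\<^bsub>G\<^esub>"
proof (rule ccontr)
  assume k: "odd k" and n: "\<not> (\<exists>b\<in>carrier G - HH. b \<otimes>\<^bsub>G\<^esub> b = \<one>\<^bsub>G\<^esub>)"
  have "\<forall>s\<in>S. inv\<^bsub>G\<^esub> s \<in> S \<and> inv\<^bsub>G\<^esub> (inv\<^bsub>G\<^esub> s) = s \<and> inv\<^bsub>G\<^esub> s \<noteq> s"
  proof
    fix s assume s: "s \<in> S"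
    have sG: "s \<in> carrier G" using s S_in by auto
    have "inv\<^bsub>G\<^esub> s \<noteq> s"
    proof
      assume "inv\<^bsub>G\<^esub> s = s"
      hence "s \<otimes>\<^bsub>G\<^esub> s = \<one>\<^bsub>G\<^esub>" using sG G.r_inv by metis
      thus False using n s sG S_out by blast
    qed
    thus "inv\<^bsub>G\<^esub> s \<in> S \<and> inv\<^bsub>G\<^esub> (inv\<^bsub>G\<^esub> s) = s \<and> inv\<^bsub>G\<^esub> s \<noteq> s" using Sinv s sG by simp
  qed
  hence "even (card S)" using invol_even[of S] fin S_in finite_subset by blast
  thus False using k cardS by simp
qed

lemma case_odd_H: "odd (card HH) \<Longrightarrow> \<exists>b\<in>carrier G - HH. b \<otimes>\<^bsub>G\<^esub> b = \<one>\<^bsub>G\<^esub>"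
proof -
  assume o: "odd (card HH)"
  obtain a where a: "a \<in> S" using S_nonempty by blast
  have a': "a \<in> carrier G - HH" using a S_in S_out by auto
  have "a \<otimes>\<^bsub>G\<^esub> a \<in> HH" using out_out a' by blast
  thus ?thesis using pow_out[OF H_sub _ o a'] by blast
qed

end

context drc
begin

interpretation G: group G by (rule grp)

lemma case_2mod4:
  assumes ev: "even (card HH)" and n4: "\<not> 4 dvd card HH"
  shows "\<exists>b\<in>carrier G - HH. b \<otimes>\<^bsub>G\<^esub> b = \<one>\<^bsub>G\<^esub>"
proof (rule ccontr)
  assume nsplit: "\<not> (\<exists>b\<in>carrier G - HH. b \<otimes>\<^bsub>G\<^esub> b = \<one>\<^bsub>G\<^esub>)"
  define m where "m = card HH div 2"
  have cH: "card HH = 2 * m" using ev m_def by simp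
  have om: "odd m"
  proof
    assume "even m"
    then obtain j where "m = 2 * j" by blast
    hence "card HH = 4 * j" using cH by simp
    thus False using n4 by simp
  qed
  have m1: "m \<ge> 1" using om by (cases m) auto
  interpret Hg: group "G\<lparr>carrier := HH\<rparr>" using subgroup.subgroup_is_group[OF H_sub grp] .
  have H1: "\<one>\<^bsub>G\<^esub> \<in> HH" using subgroup.one_closed[OF H_sub] .
  have Hm: "\<And>x y. x \<in> HH \<Longrightarrow> y \<in> HH \<Longrightarrow> x \<otimes>\<^bsub>G\<^esub> y \<in> HH" using subgroup.m_closed[OF H_sub] .
  have Hi: "\<And>x. x \<in> HH \<Longrightarrow> inv\<^bsub>G\<^esub> x \<in> HH" using subgroup.m_inv_closed[OF H_sub] .
  have HG: "\<And>x. x \<in> HH \<Longrightarrow> x \<in> carrier G" using HH_sub by blast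
  obtain t where tH: "t \<in> HH" and t1: "t \<noteq> \<one>\<^bsub>G\<^esub>" and tt: "t \<otimes>\<^bsub>G\<^esub> t = \<one>\<^bsub>G\<^esub>"
  proof -
    have "order (G\<lparr>carrier := HH\<rparr>) = 2 ^ 1 * m" using cH by (simp add: order_def)
    then obtain Q where Q: "subgroup Q (G\<lparr>carrier := HH\<rparr>)" "card Q = 2 ^ 1"
      using sylow_thm[of 2 "G\<lparr>carrier := HH\<rparr>" 1 m] Hg.is_group HH_fin by auto
    have QH: "Q \<subseteq> HH" using subgroup.subset[OF Q(1)] by simp
    have Q1: "\<one>\<^bsub>G\<^esub> \<in> Q" using subgroup.one_closed[OF Q(1)] by simp
    obtain u v where uv: "Q = {u, v}" "u \<noteq> v" using Q(2) card_2_iff by (metis power_one_right)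
    obtain t where t: "t \<in> Q" "t \<noteq> \<one>\<^bsub>G\<^esub>" using uv by blast
    have Qt: "Q = {\<one>\<^bsub>G\<^esub>, t}" using uv t Q1 by blast
    have "t \<otimes>\<^bsub>G\<^esub> t \<in> Q" using subgroup.m_closed[OF Q(1) t(1) t(1)] by simp
    moreover have "t \<otimes>\<^bsub>G\<^esub> t \<noteq> t" using t QH HG by auto
    ultimately have "t \<otimes>\<^bsub>G\<^esub> t = \<one>\<^bsub>G\<^esub>" using Qt by blast
    thus ?thesis using that t QH by blast
  qed
  have tG: "t \<in> carrier G" using tH HG by blast
  define L where "L h = (\<lambda>x. if x \<in> HH then h \<otimes>\<^bsub>G\<^esub> x else x)" for h
  define \<chi> where "\<chi> h = sign (L h)" for h
  have L_perm: "\<And>h. h \<in> HH \<Longrightarrow> permutation (L h)"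
  proof -
    fix h assume h: "h \<in> HH"
    have "bij_betw (L h) HH HH"
    proof (rule bij_betw_byWitness[of _ "L (inv\<^bsub>G\<^esub> h)"])
      show "\<forall>a\<in>HH. L (inv\<^bsub>G\<^esub> h) (L h a) = a"
        using h Hm Hi HG by (simp add: L_def G.m_assoc[symmetric])
      show "\<forall>a'\<in>HH. L h (L (inv\<^bsub>G\<^esub> h) a') = a'"
        using h Hm Hi HG by (simp add: L_def G.m_assoc[symmetric])
      show "L h ` HH \<subseteq> HH" using h Hm by (auto simp: L_def)
      show "L (inv\<^bsub>G\<^esub> h) ` HH \<subseteq> HH" using h Hm Hi by (auto simp: L_def)
    qed
    hence "L h permutes HH" by (rule bij_imp_permutes) (simp add: L_def)
    thus "permutation (L h)" using HH_fin permutation_permutes by blast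
  qed
  have L_mult: "\<And>h1 h2. h1 \<in> HH \<Longrightarrow> h2 \<in> HH \<Longrightarrow> L (h1 \<otimes>\<^bsub>G\<^esub> h2) = L h1 \<circ> L h2"
    using Hm HG by (auto simp: L_def G.m_assoc fun_eq_iff)
  have chi_mult: "\<And>h1 h2. h1 \<in> HH \<Longrightarrow> h2 \<in> HH \<Longrightarrow> \<chi> (h1 \<otimes>\<^bsub>G\<^esub> h2) = \<chi> h1 * \<chi> h2"
  proof -
    fix h1 h2 assume h: "h1 \<in> HH" "h2 \<in> HH"
    show "\<chi> (h1 \<otimes>\<^bsub>G\<^esub> h2) = \<chi> h1 * \<chi> h2"
      unfolding \<chi>_def L_mult[OF h] by (rule sign_compose[OF L_perm[OF h(1)] L_perm[OF h(2)]])
  qed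
  have chi_pm: "\<And>h. \<chi> h = 1 \<or> \<chi> h = -1" unfolding \<chi>_def sign_def by simp
  have chi_1: "\<chi> \<one>\<^bsub>G\<^esub> = 1"
  proof -
    have "L \<one>\<^bsub>G\<^esub> = id" using HG by (auto simp: L_def)
    thus ?thesis by (simp add: \<chi>_def)
  qed
  have chi_t: "\<chi> t = -1"
  proof -
    have "\<forall>x\<in>HH. t \<otimes>\<^bsub>G\<^esub> x \<in> HH" using tH Hm by blast
    hence "sign (\<lambda>x. if x \<in> HH then t \<otimes>\<^bsub>G\<^esub> x else x) = (-1) ^ (card HH div 2)"
      using sign_involution_mult[OF grp tG tt t1 HH_fin HH_sub] by blast
    moreover have "card HH div 2 = m" using m_def by simp
    moreover have "(-1::int) ^ m = -1" using om by (auto elim: oddE)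
    ultimately show ?thesis by (simp add: \<chi>_def L_def)
  qed
  define K where "K = {h \<in> HH. \<chi> h = 1}"
  have KH: "K \<subseteq> HH" by (auto simp: K_def)
  have K_sub: "subgroup K G"
  proof (rule G.subgroupI)
    show "K \<subseteq> carrier G" using KH HH_sub by blast
    show "K \<noteq> {}" using H1 chi_1 K_def by blast
  next
    fix a assume a: "a \<in> K"
    hence "\<chi> (inv\<^bsub>G\<^esub> a) * \<chi> a = 1" using chi_mult[of "inv\<^bsub>G\<^esub> a" a] Hi HG K_def chi_1 by auto
    thus "inv\<^bsub>G\<^esub> a \<in> K" using a Hi K_def by auto
  next
    fix a b assume "a \<in> K" "b \<in> K"
    thus "a \<otimes>\<^bsub>G\<^esub> b \<in> K" using chi_mult Hm K_def by auto
  qed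
  have tinv: "\<And>x. x \<in> carrier G \<Longrightarrow> t \<otimes>\<^bsub>G\<^esub> (t \<otimes>\<^bsub>G\<^esub> x) = x"
    using tG tt by (simp add: G.m_assoc[symmetric])
  have cK: "card K = m"
  proof -
    have "bij_betw (\<lambda>x. t \<otimes>\<^bsub>G\<^esub> x) K (HH - K)"
    proof (rule bij_betw_byWitness[of _ "\<lambda>x. t \<otimes>\<^bsub>G\<^esub> x"])
      show "\<forall>a\<in>K. t \<otimes>\<^bsub>G\<^esub> (t \<otimes>\<^bsub>G\<^esub> a) = a" using tinv KH HG by blast
      show "\<forall>a\<in>HH - K. t \<otimes>\<^bsub>G\<^esub> (t \<otimes>\<^bsub>G\<^esub> a) = a" using tinv HG by blast
      show "(\<lambda>x. t \<otimes>\<^bsub>G\<^esub> x) ` K \<subseteq> HH - K"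
        using chi_mult[OF tH] chi_t tH Hm KH by (auto simp: K_def)
      show "(\<lambda>x. t \<otimes>\<^bsub>G\<^esub> x) ` (HH - K) \<subseteq> K"
      proof
        fix y assume "y \<in> (\<lambda>x. t \<otimes>\<^bsub>G\<^esub> x) ` (HH - K)"
        then obtain x where x: "y = t \<otimes>\<^bsub>G\<^esub> x" "x \<in> HH" "\<chi> x \<noteq> 1" by (auto simp: K_def)
        hence "\<chi> x = -1" using chi_pm by blast
        thus "y \<in> K" using x chi_mult[OF tH x(2)] chi_t tH Hm by (auto simp: K_def)
      qed
    qed
    hence "card (HH - K) = card K" by (simp add: bij_betw_same_card)
    moreover have "card (HH - K) = card HH - card K" using KH HH_fin by (simp add: card_Diff_subset finite_subset)
    moreover have "card K \<le> card HH" using KH HH_fin card_mono by blast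
    ultimately show ?thesis using cH by simp
  qed
  have sq_neg: "\<And>s. s \<in> carrier G - HH \<Longrightarrow> \<chi> (s \<otimes>\<^bsub>G\<^esub> s) = -1"
  proof -
    fix s assume s: "s \<in> carrier G - HH"
    have ss: "s \<otimes>\<^bsub>G\<^esub> s \<in> HH" using out_out s by blast
    have "s \<otimes>\<^bsub>G\<^esub> s \<notin> K" using pow_out[OF K_sub KH _ s] cK om nsplit by blast
    thus "\<chi> (s \<otimes>\<^bsub>G\<^esub> s) = -1" using ss chi_pm K_def by blast
  qed
  have SG: "\<And>s. s \<in> S \<Longrightarrow> s \<in> carrier G - HH" using S_in S_out by blast
  have finS: "finite S" using fin S_in finite_subset by blast
  have flip: "\<And>w z. w \<in> S \<Longrightarrow> z \<in> S \<Longrightarrow> \<chi> (w \<otimes>\<^bsub>G\<^esub> z) = - \<chi> (inv\<^bsub>G\<^esub> w \<otimes>\<^bsub>G\<^esub> z)"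
  proof -
    fix w z assume w: "w \<in> S" and z: "z \<in> S"
    have wG: "w \<in> carrier G" "z \<in> carrier G" using w z S_in by auto
    have "w \<otimes>\<^bsub>G\<^esub> (inv\<^bsub>G\<^esub> w \<otimes>\<^bsub>G\<^esub> z) = z" using wG by (simp add: G.m_assoc[symmetric])
    hence e: "(w \<otimes>\<^bsub>G\<^esub> w) \<otimes>\<^bsub>G\<^esub> (inv\<^bsub>G\<^esub> w \<otimes>\<^bsub>G\<^esub> z) = w \<otimes>\<^bsub>G\<^esub> z" using wG by (simp add: G.m_assoc)
    have h1: "w \<otimes>\<^bsub>G\<^esub> w \<in> HH" using out_out SG[OF w] by blast
    have h2: "inv\<^bsub>G\<^esub> w \<otimes>\<^bsub>G\<^esub> z \<in> HH" using out_out inv_out SG w z by blast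
    show "\<chi> (w \<otimes>\<^bsub>G\<^esub> z) = - \<chi> (inv\<^bsub>G\<^esub> w \<otimes>\<^bsub>G\<^esub> z)"
      using chi_mult[OF h1 h2] e sq_neg[OF SG[OF w]] by simp
  qed
  define P where "P = S \<times> S"
  define \<pi> where "\<pi> p = snd p \<otimes>\<^bsub>G\<^esub> fst p" for p
  define N where "N x = card {z \<in> S. x \<otimes>\<^bsub>G\<^esub> inv\<^bsub>G\<^esub> z \<in> S}" for x
  have finP: "finite P" using finS P_def by simp
  have fib: "\<And>x. x \<in> HH \<Longrightarrow> card {p \<in> P. \<pi> p = x} = N x"
  proof -
    fix x assume x: "x \<in> HH"
    have xG: "x \<in> carrier G" using x HG by blast
    have "{p \<in> P. \<pi> p = x} = (\<lambda>z. (z, x \<otimes>\<^bsub>G\<^esub> inv\<^bsub>G\<^esub> z)) ` {z \<in> S. x \<otimes>\<^bsub>G\<^esub> inv\<^bsub>G\<^esub> z \<in> S}"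
    proof (intro equalityI subsetI)
      fix p assume "p \<in> {p \<in> P. \<pi> p = x}"
      then obtain z w where zw: "p = (z, w)" "z \<in> S" "w \<in> S" "w \<otimes>\<^bsub>G\<^esub> z = x"
        by (auto simp: P_def \<pi>_def)
      have zG: "z \<in> carrier G" "w \<in> carrier G" using zw S_in by auto
      have "x \<otimes>\<^bsub>G\<^esub> inv\<^bsub>G\<^esub> z = w" using zw(4)[symmetric] zG by (simp add: G.m_assoc)
      thus "p \<in> (\<lambda>z. (z, x \<otimes>\<^bsub>G\<^esub> inv\<^bsub>G\<^esub> z)) ` {z \<in> S. x \<otimes>\<^bsub>G\<^esub> inv\<^bsub>G\<^esub> z \<in> S}"
        using zw by auto
    next
      fix p assume "p \<in> (\<lambda>z. (z, x \<otimes>\<^bsub>G\<^esub> inv\<^bsub>G\<^esub> z)) ` {z \<in> S. x \<otimes>\<^bsub>G\<^esub> inv\<^bsub>G\<^esub> z \<in> S}"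
      then obtain z' where z': "z' \<in> S" "x \<otimes>\<^bsub>G\<^esub> inv\<^bsub>G\<^esub> z' \<in> S" "p = (z', x \<otimes>\<^bsub>G\<^esub> inv\<^bsub>G\<^esub> z')" by auto
      have "z' \<in> carrier G" using z' S_in by auto
      hence "(x \<otimes>\<^bsub>G\<^esub> inv\<^bsub>G\<^esub> z') \<otimes>\<^bsub>G\<^esub> z' = x" using xG by (simp add: G.m_assoc)
      thus "p \<in> {p \<in> P. \<pi> p = x}" using z' by (auto simp: P_def \<pi>_def)
    qed
    moreover have "inj_on (\<lambda>z. (z, x \<otimes>\<^bsub>G\<^esub> inv\<^bsub>G\<^esub> z)) {z \<in> S. x \<otimes>\<^bsub>G\<^esub> inv\<^bsub>G\<^esub> z \<in> S}"
      by (rule inj_onI) simp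
    ultimately show "card {p \<in> P. \<pi> p = x} = N x" by (simp add: card_image N_def)
  qed
  have sumcard: "\<And>XX. XX \<subseteq> HH \<Longrightarrow> card {p \<in> P. \<pi> p \<in> XX} = (\<Sum>x\<in>XX. N x)"
  proof -
    fix XX assume XX: "XX \<subseteq> HH"
    have finX: "finite XX" using XX HH_fin finite_subset by blast
    have "{p \<in> P. \<pi> p \<in> XX} = (\<Union>x\<in>XX. {p \<in> P. \<pi> p = x})" by auto
    moreover have "card (\<Union>x\<in>XX. {p \<in> P. \<pi> p = x}) = (\<Sum>x\<in>XX. card {p \<in> P. \<pi> p = x})"
      by (rule card_UN_disjoint[OF finX]) (use finP in auto)
    ultimately have "card {p \<in> P. \<pi> p \<in> XX} = (\<Sum>x\<in>XX. card {p \<in> P. \<pi> p = x})" by simp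
    also have "\<dots> = (\<Sum>x\<in>XX. N x)" using fib XX by (intro sum.cong) auto
    finally show "card {p \<in> P. \<pi> p \<in> XX} = (\<Sum>x\<in>XX. N x)" .
  qed
  have N1: "N \<one>\<^bsub>G\<^esub> = k"
  proof -
    have "{z \<in> S. \<one>\<^bsub>G\<^esub> \<otimes>\<^bsub>G\<^esub> inv\<^bsub>G\<^esub> z \<in> S} = S" using S_in Sinv by auto
    thus ?thesis using cardS N_def by simp
  qed
  have Nmu: "\<And>x. x \<in> HH \<Longrightarrow> x \<noteq> \<one>\<^bsub>G\<^esub> \<Longrightarrow> N x = \<mu>" using c2 N_def by simp
  have K1: "\<one>\<^bsub>G\<^esub> \<in> K" using H1 chi_1 K_def by simp
  have finK: "finite K" using KH HH_fin finite_subset by blast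
  have sumK: "(\<Sum>x\<in>K. N x) = k + (m - 1) * \<mu>"
  proof -
    have "(\<Sum>x\<in>K. N x) = N \<one>\<^bsub>G\<^esub> + (\<Sum>x\<in>K - {\<one>\<^bsub>G\<^esub>}. N x)" using sum.remove[OF finK K1] .
    also have "(\<Sum>x\<in>K - {\<one>\<^bsub>G\<^esub>}. N x) = (\<Sum>x\<in>K - {\<one>\<^bsub>G\<^esub>}. \<mu>)" using Nmu KH by (intro sum.cong) auto
    also have "\<dots> = (m - 1) * \<mu>" using cK K1 finK by simp
    finally show ?thesis using N1 by simp
  qed
  have sumHK: "(\<Sum>x\<in>HH - K. N x) = m * \<mu>"
  proof -
    have "(\<Sum>x\<in>HH - K. N x) = (\<Sum>x\<in>HH - K. \<mu>)" using Nmu K1 by (intro sum.cong) auto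
    also have "card (HH - K) = m" using cK cH KH HH_fin by (simp add: card_Diff_subset finite_subset)
    ultimately show ?thesis by simp
  qed
  have eqAB: "card {p \<in> P. \<pi> p \<in> K} = card {p \<in> P. \<pi> p \<in> HH - K}"
  proof -
    define \<sigma> where "\<sigma> p = (fst p, inv\<^bsub>G\<^esub> (snd p))" for p :: "'a \<times> 'a"
    have key: "\<And>p. p \<in> P \<Longrightarrow> \<pi> p \<in> K \<longleftrightarrow> \<pi> (\<sigma> p) \<in> HH - K"
    proof -
      fix p assume p: "p \<in> P"
      then obtain z w where zw: "p = (z, w)" "z \<in> S" "w \<in> S" using P_def by auto
      have h1: "w \<otimes>\<^bsub>G\<^esub> z \<in> HH" using out_out SG zw by blast
      have h2: "inv\<^bsub>G\<^esub> w \<otimes>\<^bsub>G\<^esub> z \<in> HH" using out_out inv_out SG zw by blast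
      have "\<chi> (w \<otimes>\<^bsub>G\<^esub> z) = - \<chi> (inv\<^bsub>G\<^esub> w \<otimes>\<^bsub>G\<^esub> z)" using flip zw by blast
      thus "\<pi> p \<in> K \<longleftrightarrow> \<pi> (\<sigma> p) \<in> HH - K"
        using h1 h2 chi_pm[of "w \<otimes>\<^bsub>G\<^esub> z"] zw by (auto simp: \<pi>_def \<sigma>_def K_def)
    qed
    have sP: "\<And>p. p \<in> P \<Longrightarrow> \<sigma> p \<in> P \<and> \<sigma> (\<sigma> p) = p"
      using Sinv S_in by (auto simp: P_def \<sigma>_def)
    have "bij_betw \<sigma> {p \<in> P. \<pi> p \<in> K} {p \<in> P. \<pi> p \<in> HH - K}"
    proof (rule bij_betw_byWitness[of _ \<sigma>])
      show "\<forall>a\<in>{p \<in> P. \<pi> p \<in> K}. \<sigma> (\<sigma> a) = a" using sP by blast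
      show "\<forall>a\<in>{p \<in> P. \<pi> p \<in> HH - K}. \<sigma> (\<sigma> a) = a" using sP by blast
      show "\<sigma> ` {p \<in> P. \<pi> p \<in> K} \<subseteq> {p \<in> P. \<pi> p \<in> HH - K}" using sP key by auto
      show "\<sigma> ` {p \<in> P. \<pi> p \<in> HH - K} \<subseteq> {p \<in> P. \<pi> p \<in> K}"
      proof
        fix q assume "q \<in> \<sigma> ` {p \<in> P. \<pi> p \<in> HH - K}"
        then obtain p where p: "p \<in> P" "\<pi> p \<in> HH - K" "q = \<sigma> p" by auto
        have sp: "\<sigma> p \<in> P" "\<sigma> (\<sigma> p) = p" using sP[OF p(1)] by auto
        have "\<pi> (\<sigma> p) \<in> K" using key[OF sp(1)] sp(2) p(2) by simp
        thus "q \<in> {p \<in> P. \<pi> p \<in> K}" using sp p(3) by simp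
      qed
    qed
    thus ?thesis by (rule bij_betw_same_card)
  qed
  have "k + (m - 1) * \<mu> = m * \<mu>" using eqAB sumcard[OF KH] sumcard[of "HH - K"] sumK sumHK by auto
  hence "k = \<mu>" using m1 by (cases m) (auto simp: algebra_simps)
  thus False using mu_lt by simp
qed

end

lemma comm_H:
  assumes "comm_group (G\<lparr>carrier := H\<rparr>)" "x \<in> H" "y \<in> H"
  shows "x \<otimes>\<^bsub>G\<^esub> y = y \<otimes>\<^bsub>G\<^esub> x"
proof -
  have "comm_monoid (G\<lparr>carrier := H\<rparr>)" using assms(1) comm_group_def by blast
  thus ?thesis using comm_monoid.m_comm[of "G\<lparr>carrier := H\<rparr>" x y] assms(2,3) by simp
qed

theorem proposition5p1:
  fixes G :: "('a, 'b) monoid_scheme" and S :: "'a set" and k \<mu> :: nat and H :: "'a set"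
  assumes "group G" and "finite (carrier G)"
    and "S \<subseteq> carrier G - {\<one>\<^bsub>G\<^esub>}" and "\<forall>s\<in>S. inv\<^bsub>G\<^esub> s \<in> S"
    and "distance_regular (carrier G) (cay_adj G S) [k, k - 1, k - \<mu>] [1, \<mu>, k]"
    and "H = {g \<in> carrier G. even (gdist (cay_adj G S) \<one>\<^bsub>G\<^esub> g)}"
    and "\<not> (4 dvd card H) \<or> odd k \<or> comm_group (G\<lparr>carrier := H\<rparr>)"
  shows "\<exists>\<phi> T. \<phi> \<in> iso (G\<lparr>carrier := H\<rparr>) (G\<lparr>carrier := H\<rparr>) \<and> (\<forall>h\<in>H. \<phi> (\<phi> h) = h) \<and>
           T \<subseteq> carrier (semidirect_Z2 (G\<lparr>carrier := H\<rparr>) \<phi>) - {\<one>\<^bsub>semidirect_Z2 (G\<lparr>carrier := H\<rparr>) \<phi>\<^esub>} \<and>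
           (\<forall>t\<in>T. inv\<^bsub>semidirect_Z2 (G\<lparr>carrier := H\<rparr>) \<phi>\<^esub> t \<in> T) \<and>
           graph_iso (carrier G) (cay_adj G S)
             (carrier (semidirect_Z2 (G\<lparr>carrier := H\<rparr>) \<phi>)) (cay_adj (semidirect_Z2 (G\<lparr>carrier := H\<rparr>) \<phi>) T)"
proof -
  interpret G: group G by (rule assms(1))
  interpret D: drc G S k \<mu> by (rule drc.intro) (use assms(1-5) in auto)
  have HH: "H = D.HH" unfolding D.HH_def assms(6) using D.d_sym by metis
  have Hs: "subgroup H G" using D.H_sub HH by simp
  have S_in: "S \<subseteq> carrier G" using D.S_in .
  have SH: "S \<inter> H = {}" using D.S_out HH by blast
  have SO: "\<And>s. s \<in> S \<Longrightarrow> s \<in> carrier G - H" using S_in SH by blast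
  have oo: "\<And>g h. g \<in> carrier G - H \<Longrightarrow> h \<in> carrier G - H \<Longrightarrow> g \<otimes>\<^bsub>G\<^esub> inv\<^bsub>G\<^esub> h \<in> H"
    using D.out_out D.inv_out HH by blast
  have OO: "\<And>g h. g \<in> carrier G - H \<Longrightarrow> h \<in> carrier G - H \<Longrightarrow> g \<otimes>\<^bsub>G\<^esub> h \<in> H"
    using D.out_out HH by blast
  have IO: "\<And>g h. g \<in> H \<Longrightarrow> h \<in> carrier G - H \<Longrightarrow> g \<otimes>\<^bsub>G\<^esub> h \<notin> H"
    using D.in_out HH by blast
  have OI: "\<And>g h. g \<in> carrier G - H \<Longrightarrow> h \<in> H \<Longrightarrow> g \<otimes>\<^bsub>G\<^esub> h \<notin> H"
    using D.out_in HH by blast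
  have IV: "\<And>g. g \<in> carrier G - H \<Longrightarrow> inv\<^bsub>G\<^esub> g \<in> carrier G - H" using D.inv_out HH by blast
  have HG: "\<And>x. x \<in> H \<Longrightarrow> x \<in> carrier G" using subgroup.subset[OF Hs] by blast
  have Hi: "\<And>x. x \<in> H \<Longrightarrow> inv\<^bsub>G\<^esub> x \<in> H" by (rule subgroup.m_inv_closed[OF Hs])
  have Sinv: "\<forall>s\<in>S. inv\<^bsub>G\<^esub> s \<in> S" by (rule assms(4))
  show ?thesis
  proof (cases "comm_group (G\<lparr>carrier := H\<rparr>)")
    case True
    obtain a where a: "a \<in> S" using D.S_nonempty by blast
    have aO: "a \<in> carrier G - H" using SO a by blast
    have aG: "a \<in> carrier G" using aO by blast
    define \<phi> where "\<phi> x = inv\<^bsub>G\<^esub> x" for x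
    define \<psi> where "\<psi> g = inv\<^bsub>G\<^esub> g \<otimes>\<^bsub>G\<^esub> a" for g
    define E where "E = (\<lambda>s. s \<otimes>\<^bsub>G\<^esub> a) ` S"
    show ?thesis
    proof -
      have f1: "\<And>x y. x \<in> H \<Longrightarrow> y \<in> H \<Longrightarrow> \<phi> (x \<otimes>\<^bsub>G\<^esub> y) = \<phi> x \<otimes>\<^bsub>G\<^esub> \<phi> y"
      proof -
        fix x y assume xy: "x \<in> H" "y \<in> H"
        have "inv\<^bsub>G\<^esub> (x \<otimes>\<^bsub>G\<^esub> y) = inv\<^bsub>G\<^esub> y \<otimes>\<^bsub>G\<^esub> inv\<^bsub>G\<^esub> x" using xy HG by (simp add: G.inv_mult_group)
        also have "\<dots> = inv\<^bsub>G\<^esub> x \<otimes>\<^bsub>G\<^esub> inv\<^bsub>G\<^esub> y" using comm_H[OF True Hi Hi] xy by blast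
        finally show "\<phi> (x \<otimes>\<^bsub>G\<^esub> y) = \<phi> x \<otimes>\<^bsub>G\<^esub> \<phi> y" by (simp add: \<phi>_def)
      qed
      have f2: "\<And>x. x \<in> H \<Longrightarrow> \<phi> x \<in> H" using Hi \<phi>_def by simp
      have f3: "\<And>x. x \<in> H \<Longrightarrow> \<phi> (\<phi> x) = x" using HG \<phi>_def by simp
      have f4: "E \<subseteq> H" using OO SO aO E_def by auto
      have f5: "\<And>e. e \<in> E \<Longrightarrow> inv\<^bsub>G\<^esub> (\<phi> e) \<in> E"
      proof -
        fix e assume e: "e \<in> E"
        hence "e \<in> carrier G" using E_def S_in aG by auto
        thus "inv\<^bsub>G\<^esub> (\<phi> e) \<in> E" using e \<phi>_def by simp
      qed
      have f6: "bij_betw \<psi> (carrier G - H) H"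
      proof (rule bij_betw_byWitness[of _ "\<lambda>h. a \<otimes>\<^bsub>G\<^esub> inv\<^bsub>G\<^esub> h"])
        show "\<forall>g\<in>carrier G - H. a \<otimes>\<^bsub>G\<^esub> inv\<^bsub>G\<^esub> (\<psi> g) = g"
          using aG by (simp add: \<psi>_def G.inv_mult_group G.m_assoc[symmetric])
        show "\<forall>h\<in>H. \<psi> (a \<otimes>\<^bsub>G\<^esub> inv\<^bsub>G\<^esub> h) = h"
          using aG HG by (simp add: \<psi>_def G.inv_mult_group G.m_assoc)
        show "\<psi> ` (carrier G - H) \<subseteq> H" using OO IV aO \<psi>_def by auto
        show "(\<lambda>h. a \<otimes>\<^bsub>G\<^esub> inv\<^bsub>G\<^esub> h) ` H \<subseteq> carrier G - H"
          using OI aO Hi HG by auto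
      qed
      have f7: "\<And>h g. h \<in> H \<Longrightarrow> g \<in> carrier G - H \<Longrightarrow>
                (h \<otimes>\<^bsub>G\<^esub> inv\<^bsub>G\<^esub> g \<in> S \<longleftrightarrow> h \<otimes>\<^bsub>G\<^esub> inv\<^bsub>G\<^esub> (\<phi> (\<psi> g)) \<in> E)"
      proof -
        fix h g assume h: "h \<in> H" and g: "g \<in> carrier G - H"
        have hg: "h \<in> carrier G" "g \<in> carrier G" using h g HG by auto
        have e: "h \<otimes>\<^bsub>G\<^esub> inv\<^bsub>G\<^esub> (\<phi> (\<psi> g)) = (h \<otimes>\<^bsub>G\<^esub> inv\<^bsub>G\<^esub> g) \<otimes>\<^bsub>G\<^esub> a"
          using hg aG by (simp add: \<phi>_def \<psi>_def G.m_assoc)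
        have "(h \<otimes>\<^bsub>G\<^esub> inv\<^bsub>G\<^esub> g) \<otimes>\<^bsub>G\<^esub> a \<in> E \<longleftrightarrow> h \<otimes>\<^bsub>G\<^esub> inv\<^bsub>G\<^esub> g \<in> S"
        proof
          assume "(h \<otimes>\<^bsub>G\<^esub> inv\<^bsub>G\<^esub> g) \<otimes>\<^bsub>G\<^esub> a \<in> E"
          then obtain s where s: "s \<in> S" "(h \<otimes>\<^bsub>G\<^esub> inv\<^bsub>G\<^esub> g) \<otimes>\<^bsub>G\<^esub> a = s \<otimes>\<^bsub>G\<^esub> a" using E_def by auto
          hence "h \<otimes>\<^bsub>G\<^esub> inv\<^bsub>G\<^esub> g = s" using G.right_cancel hg aG S_in by (metis G.inv_closed G.m_closed subsetD)
          thus "h \<otimes>\<^bsub>G\<^esub> inv\<^bsub>G\<^esub> g \<in> S" using s by simp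
        next
          assume "h \<otimes>\<^bsub>G\<^esub> inv\<^bsub>G\<^esub> g \<in> S"
          thus "(h \<otimes>\<^bsub>G\<^esub> inv\<^bsub>G\<^esub> g) \<otimes>\<^bsub>G\<^esub> a \<in> E" using E_def by auto
        qed
        thus "h \<otimes>\<^bsub>G\<^esub> inv\<^bsub>G\<^esub> g \<in> S \<longleftrightarrow> h \<otimes>\<^bsub>G\<^esub> inv\<^bsub>G\<^esub> (\<phi> (\<psi> g)) \<in> E" using e by simp
      qed
      show ?thesis by (rule constr.result[OF constr.intro[OF assms(1) Hs S_in SH Sinv oo f1 f2 f3 f4 f5 f6 f7]])
    qed
  next
    case False
    have "\<exists>b\<in>carrier G - D.HH. b \<otimes>\<^bsub>G\<^esub> b = \<one>\<^bsub>G\<^esub>"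
    proof (cases "odd k")
      case True thus ?thesis using D.case_odd_k by blast
    next
      case k: False
      hence n4: "\<not> 4 dvd card D.HH" using assms(7) False HH by blast
      show ?thesis
      proof (cases "odd (card D.HH)")
        case True thus ?thesis using D.case_odd_H by blast
      next
        case False thus ?thesis using D.case_2mod4 n4 by blast
      qed
    qed
    then obtain t where tO: "t \<in> carrier G - H" and tt: "t \<otimes>\<^bsub>G\<^esub> t = \<one>\<^bsub>G\<^esub>" using HH by blast
    have tG: "t \<in> carrier G" using tO by blast
    have ttz: "\<And>z. z \<in> carrier G \<Longrightarrow> t \<otimes>\<^bsub>G\<^esub> (t \<otimes>\<^bsub>G\<^esub> z) = z"
      using tG tt by (simp add: G.m_assoc[symmetric])
    have tinv: "inv\<^bsub>G\<^esub> t = t" using G.inv_equality[OF tt tG tG] .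
    define \<phi> where "\<phi> x = t \<otimes>\<^bsub>G\<^esub> (x \<otimes>\<^bsub>G\<^esub> t)" for x
    define \<psi> where "\<psi> g = g \<otimes>\<^bsub>G\<^esub> t" for g
    define E where "E = (\<lambda>s. s \<otimes>\<^bsub>G\<^esub> t) ` S"
    have phi_inv_e: "\<And>x. x \<in> carrier G \<Longrightarrow> inv\<^bsub>G\<^esub> (\<phi> (x \<otimes>\<^bsub>G\<^esub> t)) = inv\<^bsub>G\<^esub> x \<otimes>\<^bsub>G\<^esub> t"
    proof -
      fix x assume x: "x \<in> carrier G"
      have "\<phi> (x \<otimes>\<^bsub>G\<^esub> t) = t \<otimes>\<^bsub>G\<^esub> x" using x tG tt by (simp add: \<phi>_def G.m_assoc)
      thus "inv\<^bsub>G\<^esub> (\<phi> (x \<otimes>\<^bsub>G\<^esub> t)) = inv\<^bsub>G\<^esub> x \<otimes>\<^bsub>G\<^esub> t" using x tG tinv by (simp add: G.inv_mult_group)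
    qed
    show ?thesis
    proof -
      have f8: "\<And>x y. x \<in> H \<Longrightarrow> y \<in> H \<Longrightarrow> \<phi> (x \<otimes>\<^bsub>G\<^esub> y) = \<phi> x \<otimes>\<^bsub>G\<^esub> \<phi> y"
        using HG tG ttz by (simp add: \<phi>_def G.m_assoc)
      have f9: "\<And>x. x \<in> H \<Longrightarrow> \<phi> x \<in> H"
      proof -
        fix x assume x: "x \<in> H"
        have "x \<otimes>\<^bsub>G\<^esub> t \<in> carrier G - H" using IO[OF x tO] x HG tG by auto
        hence "t \<otimes>\<^bsub>G\<^esub> (x \<otimes>\<^bsub>G\<^esub> t) \<in> H" using OO tO by blast
        thus "\<phi> x \<in> H" by (simp add: \<phi>_def)
      qed
      have f10: "\<And>x. x \<in> H \<Longrightarrow> \<phi> (\<phi> x) = x"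
        using HG tG tt ttz by (simp add: \<phi>_def G.m_assoc)
      have f11: "E \<subseteq> H" using OO SO tO E_def by auto
      have f12: "\<And>e. e \<in> E \<Longrightarrow> inv\<^bsub>G\<^esub> (\<phi> e) \<in> E"
      proof -
        fix e assume "e \<in> E"
        then obtain s where s: "s \<in> S" "e = s \<otimes>\<^bsub>G\<^esub> t" using E_def by auto
        have "inv\<^bsub>G\<^esub> (\<phi> e) = inv\<^bsub>G\<^esub> s \<otimes>\<^bsub>G\<^esub> t" using s phi_inv_e S_in by auto
        thus "inv\<^bsub>G\<^esub> (\<phi> e) \<in> E" using s Sinv E_def by auto
      qed
      have f13: "bij_betw \<psi> (carrier G - H) H"
      proof (rule bij_betw_byWitness[of _ \<psi>])
        show "\<forall>g\<in>carrier G - H. \<psi> (\<psi> g) = g" using tG tt by (simp add: \<psi>_def G.m_assoc)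
        show "\<forall>h\<in>H. \<psi> (\<psi> h) = h" using tG tt HG by (simp add: \<psi>_def G.m_assoc)
        show "\<psi> ` (carrier G - H) \<subseteq> H" using OO tO \<psi>_def by auto
        show "\<psi> ` H \<subseteq> carrier G - H" using IO tO HG tG \<psi>_def by auto
      qed
      have f14: "\<And>h g. h \<in> H \<Longrightarrow> g \<in> carrier G - H \<Longrightarrow>
                (h \<otimes>\<^bsub>G\<^esub> inv\<^bsub>G\<^esub> g \<in> S \<longleftrightarrow> h \<otimes>\<^bsub>G\<^esub> inv\<^bsub>G\<^esub> (\<phi> (\<psi> g)) \<in> E)"
      proof -
        fix h g assume h: "h \<in> H" and g: "g \<in> carrier G - H"
        have hg: "h \<in> carrier G" "g \<in> carrier G" using h g HG by auto
        have e: "h \<otimes>\<^bsub>G\<^esub> inv\<^bsub>G\<^esub> (\<phi> (\<psi> g)) = (h \<otimes>\<^bsub>G\<^esub> inv\<^bsub>G\<^esub> g) \<otimes>\<^bsub>G\<^esub> t"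
          using phi_inv_e[OF hg(2)] hg tG by (simp add: \<psi>_def G.m_assoc)
        have "(h \<otimes>\<^bsub>G\<^esub> inv\<^bsub>G\<^esub> g) \<otimes>\<^bsub>G\<^esub> t \<in> E \<longleftrightarrow> h \<otimes>\<^bsub>G\<^esub> inv\<^bsub>G\<^esub> g \<in> S"
        proof
          assume "(h \<otimes>\<^bsub>G\<^esub> inv\<^bsub>G\<^esub> g) \<otimes>\<^bsub>G\<^esub> t \<in> E"
          then obtain s where s: "s \<in> S" "(h \<otimes>\<^bsub>G\<^esub> inv\<^bsub>G\<^esub> g) \<otimes>\<^bsub>G\<^esub> t = s \<otimes>\<^bsub>G\<^esub> t" using E_def by auto
          hence "h \<otimes>\<^bsub>G\<^esub> inv\<^bsub>G\<^esub> g = s" using G.right_cancel hg tG S_in by (metis G.inv_closed G.m_closed subsetD)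
          thus "h \<otimes>\<^bsub>G\<^esub> inv\<^bsub>G\<^esub> g \<in> S" using s by simp
        next
          assume "h \<otimes>\<^bsub>G\<^esub> inv\<^bsub>G\<^esub> g \<in> S"
          thus "(h \<otimes>\<^bsub>G\<^esub> inv\<^bsub>G\<^esub> g) \<otimes>\<^bsub>G\<^esub> t \<in> E" using E_def by auto
        qed
        thus "h \<otimes>\<^bsub>G\<^esub> inv\<^bsub>G\<^esub> g \<in> S \<longleftrightarrow> h \<otimes>\<^bsub>G\<^esub> inv\<^bsub>G\<^esub> (\<phi> (\<psi> g)) \<in> E" using e by simp
      qed
      show ?thesis by (rule constr.result[OF constr.intro[OF assms(1) Hs S_in SH Sinv oo f8 f9 f10 f11 f12 f13 f14]])
    qed
  qed
qed

end
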